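(* Let $\lambda$ be a nonempty partition. (1) For every integer $k\geq 2$, \[ \frac{s_\lambda(1^k)}{k}\geq \frac{s_\lambda(1^{k-1})}{k-1}. \] (2) If moreover $2\leq \ell(\lambda)\leq k-1$, then \[ \frac{s_\lambda(1^k)}{k}\geq \frac{s_\lambda(1^{k-1})}{k-1}+\frac{1}{k}. \]
   Context: $s_\lambda$ is the Schur polynomial of $\lambda$, and $s_\lambda(1^m)$ denotes its evaluation at $(1,\dots,1)$ with $m$ ones; equivalently, $s_\lambda(1^m)$ is the number of semistandard Young tableaux of shape $\lambda$ with entries in $\{1,\dots,m\}$ (rows weakly increasing left to right, columns strictly increasing top to bottom). $\ell(\lambda)$ is the number of nonzero parts of $\lambda$. *)

theory Defs
  imports Complex_Main
begin

definition is_partition :: "nat list \<Rightarrow> bool" where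
  "is_partition lam \<longleftrightarrow> sorted_wrt (\<ge>) lam \<and> (\<forall>x\<in>set lam. 0 < x)"

definition part_length :: "nat list \<Rightarrow> nat" where
  "part_length lam = length (filter (\<lambda>x. (0::nat) < x) lam)"

(* cells (i,j) of the Young diagram, 0-indexed: row i, column j *)
definition young_cells :: "nat list \<Rightarrow> (nat \<times> nat) set" where
  "young_cells lam = {(i, j). i < length lam \<and> j < lam ! i}"

(* semistandard Young tableaux of shape lam with entries in {1..m};
   a tableau is a filling T of the cells, taken to be 0 outside the diagram *)
definition ssyt :: "nat list \<Rightarrow> nat \<Rightarrow> (nat \<times> nat \<Rightarrow> nat) set" where
  "ssyt lam m = {T.
     (\<forall>c. c \<notin> young_cells lam \<longrightarrow> T c = 0) \<and>
     (\<forall>c\<in>young_cells lam. T c \<in> {1..m}) \<and>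
     (\<forall>i j. (i, j) \<in> young_cells lam \<and> (i, Suc j) \<in> young_cells lam \<longrightarrow> T (i, j) \<le> T (i, Suc j)) \<and>
     (\<forall>i j. (i, j) \<in> young_cells lam \<and> (Suc i, j) \<in> young_cells lam \<longrightarrow> T (i, j) < T (Suc i, j))}"

definition schur_ones :: "nat list \<Rightarrow> nat \<Rightarrow> nat" where
  "schur_ones lam m = card (ssyt lam m)"

end

theory Submission
  imports Defs "HOL-Library.FuncSet"
begin

lemma young_cells_eq: "young_cells lam = Sigma {..<length lam} (\<lambda>i. {..<lam ! i})"
  unfolding young_cells_def by auto

lemma finite_young_cells: "finite (young_cells lam)"
  unfolding young_cells_eq by auto

lemma ssyt_iff: "T \<in> ssyt lam m \<longleftrightarrow>
     (\<forall>c. c \<notin> young_cells lam \<longrightarrow> T c = 0) \<and>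
     (\<forall>c\<in>young_cells lam. 1 \<le> T c \<and> T c \<le> m) \<and>
     (\<forall>i j. (i, j) \<in> young_cells lam \<and> (i, Suc j) \<in> young_cells lam \<longrightarrow> T (i, j) \<le> T (i, Suc j)) \<and>
     (\<forall>i j. (i, j) \<in> young_cells lam \<and> (Suc i, j) \<in> young_cells lam \<longrightarrow> T (i, j) < T (Suc i, j))"
  unfolding ssyt_def by (simp only: mem_Collect_eq atLeastAtMost_iff)

lemma ssyt_zero: "T \<in> ssyt lam m \<Longrightarrow> c \<notin> young_cells lam \<Longrightarrow> T c = 0"
  unfolding ssyt_def by blast

lemma ssyt_finite: "finite (ssyt lam m)"
proof -
  let ?C = "young_cells lam"
  have inj: "inj_on (\<lambda>T::nat \<times> nat \<Rightarrow> nat. restrict T ?C) (ssyt lam m)"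
  proof (rule inj_onI)
    fix S T :: "nat \<times> nat \<Rightarrow> nat" assume S: "S \<in> ssyt lam m" and T: "T \<in> ssyt lam m"
      and eq: "restrict S ?C = restrict T ?C"
    show "S = T"
    proof
      fix c show "S c = T c"
      proof (cases "c \<in> ?C")
        case True then show ?thesis using fun_cong[OF eq, of c] by simp
      next
        case False
        have "S c = 0" using False S unfolding ssyt_def by blast
        moreover have "T c = 0" using False T unfolding ssyt_def by blast
        ultimately show ?thesis by simp
      qed
    qed
  qed
  have "(\<lambda>T. restrict T ?C) ` ssyt lam m \<subseteq> PiE ?C (\<lambda>_. {1..m})"
    unfolding ssyt_def by auto
  moreover have "finite (PiE ?C (\<lambda>_. {1..m}))"
    using finite_young_cells by (intro finite_PiE) auto
  ultimately have "finite ((\<lambda>T. restrict T ?C) ` ssyt lam m)" by (rule finite_subset)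
  then show ?thesis using inj finite_imageD by blast
qed


definition upv :: "nat \<Rightarrow> (nat \<times> nat \<Rightarrow> nat) \<Rightarrow> (nat \<times> nat \<Rightarrow> nat)" where
  "upv v T = (\<lambda>c. if v \<le> T c then T c + 1 else T c)"

definition dnv :: "nat \<Rightarrow> (nat \<times> nat \<Rightarrow> nat) \<Rightarrow> (nat \<times> nat \<Rightarrow> nat)" where
  "dnv v T = (\<lambda>c. if v < T c then T c - 1 else T c)"

lemma up_in:
  assumes v: "1 \<le> v" "v \<le> k" and T: "T \<in> ssyt lam (k - 1)"
  shows "upv v T \<in> ssyt lam k"
proof -
  let ?f = "\<lambda>x::nat. if v \<le> x then x + 1 else x"
  have fle: "\<And>x y. x \<le> y \<Longrightarrow> ?f x \<le> ?f y" by auto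
  have flt: "\<And>x y. x < y \<Longrightarrow> ?f x < ?f y" by auto
  have U: "upv v T = (\<lambda>c. ?f (T c))" unfolding upv_def by simp
  note TT = T[unfolded ssyt_iff]
  show ?thesis unfolding ssyt_iff U
  proof (intro conjI allI impI ballI)
    fix c assume "c \<notin> young_cells lam" then show "?f (T c) = 0" using ssyt_zero[OF T] v by simp
  next
    fix c assume "c \<in> young_cells lam" then show "1 \<le> ?f (T c)" "?f (T c) \<le> k" using TT v by auto
  next
    fix i j assume "(i, j) \<in> young_cells lam \<and> (i, Suc j) \<in> young_cells lam"
    then show "?f (T (i, j)) \<le> ?f (T (i, Suc j))" using TT fle by blast
  next
    fix i j assume "(i, j) \<in> young_cells lam \<and> (Suc i, j) \<in> young_cells lam"
    then show "?f (T (i, j)) < ?f (T (Suc i, j))" using TT flt by blast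
  qed
qed

lemma up_notin:
  assumes "1 \<le> v"
  shows "v \<notin> upv v T ` young_cells lam"
  unfolding upv_def by auto

lemma dn_up: "dnv v (upv v T) = T"
  unfolding dnv_def upv_def by (auto simp: fun_eq_iff)

lemma ssyt_ne:
  assumes "1 \<le> v" "T \<in> ssyt lam k" "v \<notin> T ` young_cells lam"
  shows "T c \<noteq> v"
proof (cases "c \<in> young_cells lam")
  case True then show ?thesis using assms(3) by blast
next
  case False then show ?thesis using assms(1) ssyt_zero[OF assms(2)] by auto
qed

lemma dn_in:
  assumes v: "1 \<le> v" "v \<le> k" and T: "T \<in> ssyt lam k" and nv: "v \<notin> T ` young_cells lam"
  shows "dnv v T \<in> ssyt lam (k - 1)"
proof -
  let ?f = "\<lambda>x::nat. if v < x then x - 1 else x"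
  have fle: "\<And>x y. x \<le> y \<Longrightarrow> ?f x \<le> ?f y" by auto
  have flt: "\<And>x y. x < y \<Longrightarrow> x \<noteq> v \<Longrightarrow> y \<noteq> v \<Longrightarrow> ?f x < ?f y" by auto
  have ne: "\<And>c. T c \<noteq> v" using ssyt_ne[OF v(1) T nv] .
  have U: "dnv v T = (\<lambda>c. ?f (T c))" unfolding dnv_def by simp
  note TT = T[unfolded ssyt_iff]
  show ?thesis unfolding ssyt_iff U
  proof (intro conjI allI impI ballI)
    fix c assume "c \<notin> young_cells lam" then show "?f (T c) = 0" using ssyt_zero[OF T] v by simp
  next
    fix c assume c: "c \<in> young_cells lam"
    have "1 \<le> T c" "T c \<le> k" "T c \<noteq> v" using TT c ne by auto
    then show "1 \<le> ?f (T c)" "?f (T c) \<le> k - 1" using v by auto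
  next
    fix i j assume "(i, j) \<in> young_cells lam \<and> (i, Suc j) \<in> young_cells lam"
    then show "?f (T (i, j)) \<le> ?f (T (i, Suc j))" using TT fle by blast
  next
    fix i j assume "(i, j) \<in> young_cells lam \<and> (Suc i, j) \<in> young_cells lam"
    then show "?f (T (i, j)) < ?f (T (Suc i, j))" using TT flt ne by blast
  qed
qed

lemma up_dn:
  assumes "1 \<le> v" "T \<in> ssyt lam k" "v \<notin> T ` young_cells lam"
  shows "upv v (dnv v T) = T"
proof -
  have ne: "\<And>c. T c \<noteq> v" using ssyt_ne[OF assms] .
  show ?thesis unfolding upv_def dnv_def fun_eq_iff
  proof
    fix c show "(if v \<le> (if v < T c then T c - 1 else T c) then (if v < T c then T c - 1 else T c) + 1
          else (if v < T c then T c - 1 else T c)) = T c" using ne[of c] by auto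
  qed
qed


lemma count_pairs:
  assumes k: "1 \<le> k"
  shows "card (Sigma (ssyt lam k) (\<lambda>T. {1..k} - T ` young_cells lam)) = card (ssyt lam (k - 1)) * k"
proof -
  let ?P = "Sigma (ssyt lam k) (\<lambda>T. {1..k} - T ` young_cells lam)"
  let ?Q = "ssyt lam (k - 1) \<times> {1..k}"
  have "bij_betw (\<lambda>(T, v). (upv v T, v)) ?Q ?P"
  proof (rule bij_betw_byWitness[where f' = "\<lambda>(T, v). (dnv v T, v)"])
    show "\<forall>a\<in>?Q. (\<lambda>(T, v). (dnv v T, v)) ((\<lambda>(T, v). (upv v T, v)) a) = a"
      by (auto simp: dn_up)
    show "\<forall>a\<in>?P. (\<lambda>(T, v). (upv v T, v)) ((\<lambda>(T, v). (dnv v T, v)) a) = a"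
      by (auto simp: up_dn)
    show "(\<lambda>(T, v). (upv v T, v)) ` ?Q \<subseteq> ?P"
      using up_in up_notin by fastforce
    show "(\<lambda>(T, v). (dnv v T, v)) ` ?P \<subseteq> ?Q"
      using dn_in by fastforce
  qed
  then have "card ?Q = card ?P" by (rule bij_betw_same_card)
  then show ?thesis by (simp add: card_cartesian_product)
qed

lemma cell00:
  assumes "is_partition lam" "lam \<noteq> []"
  shows "(0, 0) \<in> young_cells lam"
  using assms unfolding is_partition_def young_cells_def by (cases lam) auto

lemma main_identity:
  assumes P: "is_partition lam" "lam \<noteq> []" and k: "1 \<le> k"
  shows "card (ssyt lam (k - 1)) * k + (\<Sum>T\<in>ssyt lam k. card (T ` young_cells lam) - 1)
       = card (ssyt lam k) * (k - 1)"
proof -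
  let ?A = "ssyt lam k"
  let ?V = "\<lambda>T::nat \<times> nat \<Rightarrow> nat. T ` young_cells lam"
  have fin: "finite ?A" by (rule ssyt_finite)
  have sub: "\<And>T. T \<in> ?A \<Longrightarrow> ?V T \<subseteq> {1..k}" unfolding ssyt_iff by auto
  have ge1: "\<And>T. T \<in> ?A \<Longrightarrow> 1 \<le> card (?V T)"
  proof -
    fix T assume "T \<in> ?A"
    have "?V T \<noteq> {}" using cell00[OF P] by blast
    moreover have "finite (?V T)" using finite_young_cells by blast
    ultimately show "1 \<le> card (?V T)" by (simp add: Suc_le_eq card_gt_0_iff)
  qed
  have lek: "\<And>T. T \<in> ?A \<Longrightarrow> card (?V T) \<le> k"
    using sub by (metis card_atLeastAtMost card_mono diff_Suc_1 finite_atLeastAtMost)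
  have "card (ssyt lam (k - 1)) * k = card (Sigma ?A (\<lambda>T. {1..k} - ?V T))"
    using count_pairs[OF k] by simp
  also have "\<dots> = (\<Sum>T\<in>?A. card ({1..k} - ?V T))"
    using fin by (intro card_SigmaI) auto
  also have "\<dots> = (\<Sum>T\<in>?A. k - card (?V T))"
    using sub by (intro sum.cong refl) (simp add: card_Diff_subset[OF finite_imageI[OF finite_young_cells]])
  finally have e: "card (ssyt lam (k - 1)) * k = (\<Sum>T\<in>?A. k - card (?V T))" .
  have "(\<Sum>T\<in>?A. k - card (?V T)) + (\<Sum>T\<in>?A. card (?V T) - 1) = (\<Sum>T\<in>?A. k - 1)"
    unfolding sum.distrib[symmetric] using ge1 lek by (intro sum.cong refl) auto
  then show ?thesis using e by simp
qed

definition fam :: "nat list \<Rightarrow> nat \<Rightarrow> (nat \<times> nat \<Rightarrow> nat)" where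
  "fam lam c = (\<lambda>p. if p \<in> young_cells lam then fst p + 1 + c else 0)"

lemma fam_in:
  assumes "c + length lam \<le> k"
  shows "fam lam c \<in> ssyt lam k"
  unfolding ssyt_iff
proof (intro conjI allI impI ballI)
  fix p assume "p \<notin> young_cells lam" then show "fam lam c p = 0" unfolding fam_def by simp
next
  fix p assume p: "p \<in> young_cells lam"
  then have "fst p < length lam" unfolding young_cells_def by auto
  then show "1 \<le> fam lam c p" "fam lam c p \<le> k" using p assms unfolding fam_def by auto
next
  fix i j assume "(i, j) \<in> young_cells lam \<and> (i, Suc j) \<in> young_cells lam"
  then show "fam lam c (i, j) \<le> fam lam c (i, Suc j)" unfolding fam_def by simp
next
  fix i j assume "(i, j) \<in> young_cells lam \<and> (Suc i, j) \<in> young_cells lam"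
  then show "fam lam c (i, j) < fam lam c (Suc i, j)" unfolding fam_def by simp
qed

lemma fam_vals:
  assumes "is_partition lam"
  shows "fam lam c ` young_cells lam = (\<lambda>i. i + 1 + c) ` {..<length lam}"
proof
  show "fam lam c ` young_cells lam \<subseteq> (\<lambda>i. i + 1 + c) ` {..<length lam}"
  proof
    fix x assume "x \<in> fam lam c ` young_cells lam"
    then obtain p where p: "p \<in> young_cells lam" "x = fam lam c p" by blast
    then have "fst p < length lam" "x = fst p + 1 + c" unfolding young_cells_def fam_def by auto
    then show "x \<in> (\<lambda>i. i + 1 + c) ` {..<length lam}" by blast
  qed
  show "(\<lambda>i. i + 1 + c) ` {..<length lam} \<subseteq> fam lam c ` young_cells lam"
  proof
    fix x assume "x \<in> (\<lambda>i. i + 1 + c) ` {..<length lam}"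
    then obtain i where i: "i < length lam" "x = i + 1 + c" by auto
    have "lam ! i > 0" using assms i unfolding is_partition_def by auto
    then have "(i, 0) \<in> young_cells lam" using i unfolding young_cells_def by auto
    moreover have "x = fam lam c (i, 0)" using i calculation unfolding fam_def by simp
    ultimately show "x \<in> fam lam c ` young_cells lam" by blast
  qed
qed

lemma fam_card:
  assumes "is_partition lam"
  shows "card (fam lam c ` young_cells lam) = length lam"
  unfolding fam_vals[OF assms] by (subst card_image) (auto simp: inj_on_def)

lemma fam_inj:
  assumes "is_partition lam" "lam \<noteq> []"
  shows "inj_on (fam lam) S"
proof (rule inj_onI)
  fix a b assume "fam lam a = fam lam b"
  then have "fam lam a (0, 0) = fam lam b (0, 0)" by simp
  then show "a = b" using cell00[OF assms] unfolding fam_def by simp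
qed

lemma part_length_eq:
  assumes "is_partition lam"
  shows "part_length lam = length lam"
proof -
  have "filter (\<lambda>x. (0::nat) < x) lam = lam" using assms unfolding is_partition_def
    by (simp add: filter_id_conv)
  then show ?thesis unfolding part_length_def by simp
qed

lemma sum_bound:
  assumes P: "is_partition lam" "lam \<noteq> []" and l: "2 \<le> length lam" "length lam \<le> k - 1"
  shows "k - 1 \<le> (\<Sum>T\<in>ssyt lam k. card (T ` young_cells lam) - 1)"
proof -
  let ?l = "length lam"
  let ?S = "fam lam ` {0..k - ?l}"
  have subS: "?S \<subseteq> ssyt lam k"
  proof
    fix T assume "T \<in> ?S"
    then obtain c where c: "c \<in> {0..k - ?l}" "T = fam lam c" by blast
    then have "c + ?l \<le> k" using l by simp
    then show "T \<in> ssyt lam k" using fam_in c by simp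
  qed
  have "(\<Sum>T\<in>?S. card (T ` young_cells lam) - 1) = (\<Sum>c\<in>{0..k - ?l}. card (fam lam c ` young_cells lam) - 1)"
    using fam_inj[OF P] by (subst sum.reindex) auto
  also have "\<dots> = (k - ?l + 1) * (?l - 1)" using fam_card[OF P(1)] by simp
  finally have e: "(\<Sum>T\<in>?S. card (T ` young_cells lam) - 1) = (k - ?l + 1) * (?l - 1)" .
  have "k - 1 \<le> (k - ?l + 1) * (?l - 1)"
  proof -
    define d where "d = k - ?l - 1"
    define e where "e = ?l - 2"
    have d: "k = e + 3 + d" and e: "?l = e + 2" using l unfolding d_def e_def by linarith+
    have "k - 1 = e + 2 + d" "k - ?l + 1 = d + 2" "?l - 1 = e + 1" using d e by linarith+
    moreover have "e + 2 + d \<le> (d + 2) * (e + 1)" by (simp add: algebra_simps)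
    ultimately show ?thesis by simp
  qed
  also have "\<dots> \<le> (\<Sum>T\<in>ssyt lam k. card (T ` young_cells lam) - 1)"
    unfolding e[symmetric] by (rule sum_mono2[OF ssyt_finite subS]) auto
  finally show ?thesis .
qed

lemma aux1:
  fixes x y a b s :: real
  assumes "x > 0" "y > 0" "b * y + s = a * x" "s \<ge> 0"
  shows "b / x \<le> a / y"
proof -
  have "b * y \<le> a * x" using assms by linarith
  then show ?thesis using assms(1,2) by (simp add: divide_simps mult.commute)
qed

lemma aux2:
  fixes x y a b s :: real
  assumes "x > 0" "y > 0" "b * y + s = a * x" "s \<ge> x"
  shows "b / x + 1 / y \<le> a / y"
proof -
  have h: "b * y + x \<le> a * x" using assms by linarith
  have "b / x + 1 / y = (b * y + x) / (x * y)" using assms(1,2) by (simp add: field_simps)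
  also have "\<dots> \<le> (a * x) / (x * y)" using h assms(1,2) by (intro divide_right_mono) auto
  also have "\<dots> = a / y" using assms(1) by simp
  finally show ?thesis .
qed

theorem lemma4p1:
  fixes lam :: "nat list"
  assumes "is_partition lam" and "lam \<noteq> []"
  shows "(\<forall>k::nat. k \<ge> 2 \<longrightarrow>
           real (schur_ones lam k) / real k \<ge> real (schur_ones lam (k - 1)) / real (k - 1))
      \<and> (\<forall>k::nat. k \<ge> 2 \<longrightarrow> 2 \<le> part_length lam \<longrightarrow> part_length lam \<le> k - 1 \<longrightarrow>
           real (schur_ones lam k) / real k \<ge> real (schur_ones lam (k - 1)) / real (k - 1) + 1 / real k)"
proof (intro conjI allI impI)
  fix k :: nat assume k: "k \<ge> 2"
  define a where "a = schur_ones lam k"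
  define b where "b = schur_ones lam (k - 1)"
  define s where "s = (\<Sum>T\<in>ssyt lam k. card (T ` young_cells lam) - 1)"
  have id: "b * k + s = a * (k - 1)"
    using main_identity[OF assms, of k] k unfolding schur_ones_def a_def b_def s_def by simp
  have r: "real b * real k + real s = real a * real (k - 1)"
    using arg_cong[OF id, of real] by simp
  have kp: "real (k - 1) > 0" "real k > 0" using k by auto
  show "real (schur_ones lam (k - 1)) / real (k - 1) \<le> real (schur_ones lam k) / real k"
    unfolding a_def[symmetric] b_def[symmetric] using aux1[OF kp r] by simp
  assume l: "2 \<le> part_length lam" "part_length lam \<le> k - 1"
  have "k - 1 \<le> s" unfolding s_def using sum_bound[OF assms] l part_length_eq[OF assms(1)] by simp
  then have "real (k - 1) \<le> real s" by (simp only: of_nat_le_iff)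
  then show "real (schur_ones lam (k - 1)) / real (k - 1) + 1 / real k \<le> real (schur_ones lam k) / real k"
    unfolding a_def[symmetric] b_def[symmetric] using aux2[OF kp r] by simp
qed

end
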